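(* Let $\Bbbk$ be a field of characteristic zero, $S=\Bbbk[x_1,\ldots,x_5]$, and let $I = (x_1^3,\dots , x_5^3, x_1^2x_2, x_1x_2^2)$ and $J = (x_1^3,\dots , x_5^3, x_1^2x_2, x_1x_2^2,x_3x_4x_5)$. Then $S/I$ and $S/J$ both fail the WLP in degree $4$.
   Context: For a monomial ideal $I$, $A=S/I$ fails the WLP in degree $i$ if $\times(x_1+\cdots+x_5): A_i\to A_{i+1}$ is neither injective nor surjective. *)

theory Defs
  imports Main "HOL-Library.Poly_Mapping"
begin

text \<open>The ring S = k[x_1,...,x_5] is the subring of polynomials
  involving only the variables with index 1..5.\<close>

type_synonym 'a mpoly = "(nat \<Rightarrow>\<^sub>0 nat) \<Rightarrow>\<^sub>0 'a"

definition Var :: "nat \<Rightarrow> 'a::comm_ring_1 mpoly" where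
  "Var i = Poly_Mapping.single (Poly_Mapping.single i 1) 1"

definition in_S :: "'a::comm_ring_1 mpoly \<Rightarrow> bool" where
  "in_S p \<longleftrightarrow> (\<forall>m\<in>Poly_Mapping.keys p. Poly_Mapping.keys m \<subseteq> {1..5::nat})"

definition mdeg :: "(nat \<Rightarrow>\<^sub>0 nat) \<Rightarrow> nat" where
  "mdeg m = (\<Sum>i\<in>Poly_Mapping.keys m. Poly_Mapping.lookup m i)"

definition homog :: "nat \<Rightarrow> 'a::comm_ring_1 mpoly \<Rightarrow> bool" where
  "homog d p \<longleftrightarrow> (\<forall>m\<in>Poly_Mapping.keys p. mdeg m = d)"

definition ideal_gen :: "'a::comm_ring_1 mpoly list \<Rightarrow> 'a mpoly set" where
  "ideal_gen gs = {p. \<exists>c. (\<forall>k<length gs. in_S (c k)) \<and> p = (\<Sum>k<length gs. c k * gs ! k)}"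

definition ell :: "'a::comm_ring_1 mpoly" where
  "ell = (\<Sum>i\<in>{1..5}. Var i)"

text \<open>Multiplication by ell from A_d to A_(d+1), where A = S/I, is injective
  resp. surjective.\<close>
definition mult_ell_injective :: "'a::comm_ring_1 mpoly set \<Rightarrow> nat \<Rightarrow> bool" where
  "mult_ell_injective I d \<longleftrightarrow>
     (\<forall>f. in_S f \<and> homog d f \<and> ell * f \<in> I \<longrightarrow> f \<in> I)"

definition mult_ell_surjective :: "'a::comm_ring_1 mpoly set \<Rightarrow> nat \<Rightarrow> bool" where
  "mult_ell_surjective I d \<longleftrightarrow>
     (\<forall>g. in_S g \<and> homog (d + 1) g \<longrightarrow>
        (\<exists>f. in_S f \<and> homog d f \<and> g - ell * f \<in> I))"

definition fails_WLP_in_degree :: "'a::comm_ring_1 mpoly set \<Rightarrow> nat \<Rightarrow> bool" where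
  "fails_WLP_in_degree I d \<longleftrightarrow> \<not> mult_ell_injective I d \<and> \<not> mult_ell_surjective I d"

definition gens_I :: "'a::comm_ring_1 mpoly list" where
  "gens_I = [Var 1 ^ 3, Var 2 ^ 3, Var 3 ^ 3, Var 4 ^ 3, Var 5 ^ 3,
             Var 1 ^ 2 * Var 2, Var 1 * Var 2 ^ 2]"

definition gens_J :: "'a::comm_ring_1 mpoly list" where
  "gens_J = gens_I @ [Var 3 * Var 4 * Var 5]"

end

theory Submission
  imports Defs
begin

definition mon :: "nat \<Rightarrow> nat \<Rightarrow> nat \<Rightarrow> nat \<Rightarrow> nat \<Rightarrow> (nat \<Rightarrow>\<^sub>0 nat)" where
  "mon a b c d e = Poly_Mapping.single 1 a + Poly_Mapping.single 2 b + Poly_Mapping.single 3 c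
     + Poly_Mapping.single 4 d + Poly_Mapping.single 5 e"

lemma lookup_mon:
  "Poly_Mapping.lookup (mon a b c d e) i =
     (if i = 1 then a else if i = 2 then b else if i = 3 then c else if i = 4 then d else if i = 5 then e else 0)"
  by (simp add: mon_def lookup_add lookup_single when_def)

lemma mon_eq_iff [simp]:
  "mon a b c d e = mon a' b' c' d' e' \<longleftrightarrow> a = a' \<and> b = b' \<and> c = c' \<and> d = d' \<and> e = e'"
proof
  assume h: "mon a b c d e = mon a' b' c' d' e'"
  show "a = a' \<and> b = b' \<and> c = c' \<and> d = d' \<and> e = e'"
    using arg_cong[OF h, of "\<lambda>m. Poly_Mapping.lookup m 1"] arg_cong[OF h, of "\<lambda>m. Poly_Mapping.lookup m 2"]
      arg_cong[OF h, of "\<lambda>m. Poly_Mapping.lookup m 3"] arg_cong[OF h, of "\<lambda>m. Poly_Mapping.lookup m 4"]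
      arg_cong[OF h, of "\<lambda>m. Poly_Mapping.lookup m 5"]
    by (simp add: lookup_mon)
qed simp

lemma mon_add [simp]:
  "mon a b c d e + mon a' b' c' d' e' = mon (a+a') (b+b') (c+c') (d+d') (e+e')"
  by (rule poly_mapping_eqI) (simp add: lookup_add lookup_mon)

lemma mon_dvd:
  assumes "mon a b c d e = x + mon a' b' c' d' e'"
  shows "a' \<le> a \<and> b' \<le> b \<and> c' \<le> c \<and> d' \<le> d \<and> e' \<le> e"
proof -
  have "\<And>i. Poly_Mapping.lookup (mon a b c d e) i = Poly_Mapping.lookup x i + Poly_Mapping.lookup (mon a' b' c' d' e') i"
    using assms by (simp add: lookup_add)
  from this[of 1] this[of 2] this[of 3] this[of 4] this[of 5] show ?thesis
    by (simp add: lookup_mon)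
qed

lemma Var_mon:
  "Var 1 = Poly_Mapping.single (mon 1 0 0 0 0) 1"
  "Var 2 = Poly_Mapping.single (mon 0 1 0 0 0) 1"
  "Var 3 = Poly_Mapping.single (mon 0 0 1 0 0) 1"
  "Var 4 = Poly_Mapping.single (mon 0 0 0 1 0) 1"
  "Var 5 = Poly_Mapping.single (mon 0 0 0 0 1) 1"
  by (simp_all add: Var_def mon_def)

lemma ell_expand: "ell = Var 1 + Var 2 + Var 3 + Var 4 + Var 5"
  by (simp add: ell_def numeral_eq_Suc atLeastAtMostSuc_conv add.commute add.left_commute)

lemma mon_of:
  assumes "Poly_Mapping.keys m \<subseteq> {1..5}"
  shows "m = mon (Poly_Mapping.lookup m 1) (Poly_Mapping.lookup m 2) (Poly_Mapping.lookup m 3)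
               (Poly_Mapping.lookup m 4) (Poly_Mapping.lookup m 5)"
proof (rule poly_mapping_eqI)
  fix i
  show "Poly_Mapping.lookup m i = Poly_Mapping.lookup (mon (Poly_Mapping.lookup m 1) (Poly_Mapping.lookup m 2) (Poly_Mapping.lookup m 3)
               (Poly_Mapping.lookup m 4) (Poly_Mapping.lookup m 5)) i"
  proof (cases "i \<in> {1..5}")
    case True
    then have "i = 1 \<or> i = 2 \<or> i = 3 \<or> i = 4 \<or> i = 5" by auto
    then show ?thesis by (auto simp: lookup_mon)
  next
    case False
    then have "Poly_Mapping.lookup m i = 0" using assms by (meson in_keys_iff subsetD)
    then show ?thesis using False by (auto simp: lookup_mon)
  qed
qed

lemma mdeg_of:
  assumes "Poly_Mapping.keys m \<subseteq> {1..5}"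
  shows "mdeg m = Poly_Mapping.lookup m 1 + Poly_Mapping.lookup m 2 + Poly_Mapping.lookup m 3
               + Poly_Mapping.lookup m 4 + Poly_Mapping.lookup m 5"
proof -
  have "mdeg m = (\<Sum>i\<in>{1..5}. Poly_Mapping.lookup m i)"
    unfolding mdeg_def by (rule sum.mono_neutral_left) (use assms in \<open>auto simp: in_keys_iff\<close>)
  also have "\<dots> = Poly_Mapping.lookup m 1 + Poly_Mapping.lookup m 2 + Poly_Mapping.lookup m 3
               + Poly_Mapping.lookup m 4 + Poly_Mapping.lookup m 5"
    by (simp add: numeral_eq_Suc atLeastAtMostSuc_conv add.commute add.left_commute)
  finally show ?thesis .
qed

definition AA :: "nat \<Rightarrow> nat \<Rightarrow> 'a::comm_ring_1" where
  "AA x y = (if x = 2 \<and> y = 0 then 1 else if x = 1 \<and> y = 1 then -1 else if x = 0 \<and> y = 2 then 1 else 0)"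

definition BB :: "nat \<Rightarrow> nat \<Rightarrow> nat \<Rightarrow> 'a::comm_ring_1" where
  "BB x y z = (if x = 2 \<and> y = 1 \<and> z = 0 then 1 else if x = 2 \<and> y = 0 \<and> z = 1 then -1
     else if x = 1 \<and> y = 2 \<and> z = 0 then -1 else if x = 0 \<and> y = 2 \<and> z = 1 then 1
     else if x = 1 \<and> y = 0 \<and> z = 2 then 1 else if x = 0 \<and> y = 1 \<and> z = 2 then -1 else 0)"

lemma AA_sum: "AA (Suc x) y + AA x (Suc y) = (0::'a::comm_ring_1)"
  by (cases x; cases y) (auto simp: AA_def)

lemma BB_sum: "BB (Suc x) y z + BB x (Suc y) z + BB x y (Suc z) = (0::'a::comm_ring_1)"
  unfolding BB_def by (cases x; cases y; cases z) (auto simp: numeral_eq_Suc)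

definition Wm :: "(nat \<Rightarrow>\<^sub>0 nat) \<Rightarrow> 'a::comm_ring_1" where
  "Wm m = AA (Poly_Mapping.lookup m 1) (Poly_Mapping.lookup m 2) *
          BB (Poly_Mapping.lookup m 3) (Poly_Mapping.lookup m 4) (Poly_Mapping.lookup m 5)"

definition phi :: "'a::comm_ring_1 mpoly \<Rightarrow> 'a" where
  "phi p = (\<Sum>m\<in>Poly_Mapping.keys p. Wm m * Poly_Mapping.lookup p m)"

lemma phi_alt:
  assumes "finite K" "Poly_Mapping.keys p \<subseteq> K"
  shows "phi p = (\<Sum>m\<in>K. Wm m * Poly_Mapping.lookup p m)"
  unfolding phi_def by (rule sum.mono_neutral_left) (use assms in \<open>auto simp: in_keys_iff\<close>)

lemma phi_add: "phi (p + q) = phi p + phi q"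
proof -
  let ?K = "Poly_Mapping.keys p \<union> Poly_Mapping.keys q \<union> Poly_Mapping.keys (p + q)"
  have "phi (p + q) = (\<Sum>m\<in>?K. Wm m * Poly_Mapping.lookup (p+q) m)" by (rule phi_alt) auto
  also have "\<dots> = (\<Sum>m\<in>?K. Wm m * Poly_Mapping.lookup p m) + (\<Sum>m\<in>?K. Wm m * Poly_Mapping.lookup q m)"
    by (simp add: lookup_add distrib_left sum.distrib)
  also have "(\<Sum>m\<in>?K. Wm m * Poly_Mapping.lookup p m) = phi p" by (rule phi_alt[symmetric]) auto
  also have "(\<Sum>m\<in>?K. Wm m * Poly_Mapping.lookup q m) = phi q" by (rule phi_alt[symmetric]) auto
  finally show ?thesis .
qed

lemma phi_diff: "phi (p - q) = phi p - phi q"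
proof -
  let ?K = "Poly_Mapping.keys p \<union> Poly_Mapping.keys q \<union> Poly_Mapping.keys (p - q)"
  have "phi (p - q) = (\<Sum>m\<in>?K. Wm m * Poly_Mapping.lookup (p-q) m)" by (rule phi_alt) auto
  also have "\<dots> = (\<Sum>m\<in>?K. Wm m * Poly_Mapping.lookup p m) - (\<Sum>m\<in>?K. Wm m * Poly_Mapping.lookup q m)"
    by (simp add: lookup_minus right_diff_distrib sum_subtractf)
  also have "(\<Sum>m\<in>?K. Wm m * Poly_Mapping.lookup p m) = phi p" by (rule phi_alt[symmetric]) auto
  also have "(\<Sum>m\<in>?K. Wm m * Poly_Mapping.lookup q m) = phi q" by (rule phi_alt[symmetric]) auto
  finally show ?thesis .
qed

lemma phi_zero: "phi 0 = 0" by (simp add: phi_def)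

lemma phi_sum: "phi (sum f X) = (\<Sum>x\<in>X. phi (f x))"
  by (induction X rule: infinite_finite_induct) (auto simp: phi_zero phi_add)

lemma phi_single: "phi (Poly_Mapping.single m c) = Wm m * c"
  by (simp add: phi_def)

lemma ell_single:
  "ell * Poly_Mapping.single (mon a b c d e) k =
     Poly_Mapping.single (mon (a+1) b c d e) k + Poly_Mapping.single (mon a (b+1) c d e) k
   + Poly_Mapping.single (mon a b (c+1) d e) k + Poly_Mapping.single (mon a b c (d+1) e) k
   + Poly_Mapping.single (mon a b c d (e+1)) k"
  unfolding ell_expand Var_mon distrib_right mult_single mon_add by (simp add: add.commute)

lemma phi_ell_single: "phi (ell * Poly_Mapping.single (mon a b c d e) (k::'a::comm_ring_1)) = 0"
proof -
  have "phi (ell * Poly_Mapping.single (mon a b c d e) k) =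
     k * ((AA (Suc a) b + AA a (Suc b)) * BB c d e + AA a b * (BB (Suc c) d e + BB c (Suc d) e + BB c d (Suc e)))"
    unfolding ell_single phi_add phi_single Wm_def by (simp add: lookup_mon algebra_simps)
  then show ?thesis by (simp add: AA_sum BB_sum)
qed

lemma keys_mon: "Poly_Mapping.keys (mon a b c d e) \<subseteq> {1..5}"
proof
  fix i assume "i \<in> Poly_Mapping.keys (mon a b c d e)"
  then have "Poly_Mapping.lookup (mon a b c d e) i \<noteq> 0" by (simp add: in_keys_iff)
  then show "i \<in> {1..5}" by (simp add: lookup_mon split: if_splits)
qed

lemma poly_expand: "f = (\<Sum>m\<in>Poly_Mapping.keys f. Poly_Mapping.single m (Poly_Mapping.lookup f m))"
proof (rule poly_mapping_eqI)
  fix k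
  have "(\<Sum>m\<in>Poly_Mapping.keys f. (Poly_Mapping.lookup f m when m = k)) = Poly_Mapping.lookup f k"
    by (simp add: when_def sum.delta in_keys_iff)
  then show "Poly_Mapping.lookup f k = Poly_Mapping.lookup (\<Sum>m\<in>Poly_Mapping.keys f. Poly_Mapping.single m (Poly_Mapping.lookup f m)) k"
    by (simp add: lookup_sum lookup_single)
qed

lemma phi_ell: assumes "in_S f" shows "phi (ell * f) = (0::'a::comm_ring_1)"
proof -
  have "phi (ell * f) = (\<Sum>m\<in>Poly_Mapping.keys f. phi (ell * Poly_Mapping.single m (Poly_Mapping.lookup f m)))"
    by (subst poly_expand) (simp add: sum_distrib_left phi_sum)
  also have "\<dots> = 0"
  proof (rule sum.neutral, rule ballI)
    fix m assume "m \<in> Poly_Mapping.keys f"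
    then have "Poly_Mapping.keys m \<subseteq> {1..5}" using assms by (auto simp: in_S_def)
    then have eq: "m = mon (Poly_Mapping.lookup m 1) (Poly_Mapping.lookup m 2) (Poly_Mapping.lookup m 3)
               (Poly_Mapping.lookup m 4) (Poly_Mapping.lookup m 5)" by (rule mon_of)
    show "phi (ell * Poly_Mapping.single m (Poly_Mapping.lookup f m)) = 0"
      using phi_ell_single[of "Poly_Mapping.lookup m 1" "Poly_Mapping.lookup m 2" "Poly_Mapping.lookup m 3"
               "Poly_Mapping.lookup m 4" "Poly_Mapping.lookup m 5" "Poly_Mapping.lookup f m"]
      by (simp only: eq[symmetric])
  qed
  finally show ?thesis .
qed

lemma ideal_keys:
  assumes "p \<in> ideal_gen gs" "\<And>k. k < length gs \<Longrightarrow> Poly_Mapping.keys (gs ! k) \<subseteq> G"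
    "m \<in> Poly_Mapping.keys p"
  shows "\<exists>x u. u \<in> G \<and> m = x + u"
proof -
  obtain c where p: "p = (\<Sum>k<length gs. c k * gs ! k)" using assms(1) by (auto simp: ideal_gen_def)
  have "m \<in> Poly_Mapping.keys (\<Sum>k<length gs. c k * gs ! k)" using p assms(3) by simp
  then have "m \<in> (\<Union>k\<in>{..<length gs}. Poly_Mapping.keys (c k * gs ! k))"
    using keys_sum[of "\<lambda>k. c k * gs ! k" "{..<length gs}"] by (rule subsetD[rotated])
  then obtain k where k: "k < length gs" "m \<in> Poly_Mapping.keys (c k * gs ! k)" by auto
  have "m \<in> {a + b |a b. a \<in> Poly_Mapping.keys (c k) \<and> b \<in> Poly_Mapping.keys (gs ! k)}"
    using k(2) keys_mult[of "c k" "gs ! k"] by (rule subsetD[rotated])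
  then obtain x u where "u \<in> Poly_Mapping.keys (gs ! k)" "m = x + u" by auto
  then show ?thesis using assms(2)[OF k(1)] by blast
qed

definition GJ :: "(nat \<Rightarrow>\<^sub>0 nat) set" where
  "GJ = {mon 3 0 0 0 0, mon 0 3 0 0 0, mon 0 0 3 0 0, mon 0 0 0 3 0, mon 0 0 0 0 3,
         mon 2 1 0 0 0, mon 1 2 0 0 0, mon 0 0 1 1 1}"

lemma Var_pow:
  "Var 1 ^ 3 = Poly_Mapping.single (mon 3 0 0 0 0) 1"
  "Var 2 ^ 3 = Poly_Mapping.single (mon 0 3 0 0 0) 1"
  "Var 3 ^ 3 = Poly_Mapping.single (mon 0 0 3 0 0) 1"
  "Var 4 ^ 3 = Poly_Mapping.single (mon 0 0 0 3 0) 1"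
  "Var 5 ^ 3 = Poly_Mapping.single (mon 0 0 0 0 3) 1"
  "Var 1 ^ 2 * Var 2 = Poly_Mapping.single (mon 2 1 0 0 0) 1"
  "Var 1 * Var 2 ^ 2 = Poly_Mapping.single (mon 1 2 0 0 0) 1"
  "Var 3 * Var 4 * Var 5 = Poly_Mapping.single (mon 0 0 1 1 1) 1"
  unfolding Var_mon power2_eq_square power3_eq_cube mult_single mon_add by (simp_all add: numeral_eq_Suc)

lemma gens_I_keys: "k < length (gens_I :: 'a::comm_ring_1 mpoly list) \<Longrightarrow> Poly_Mapping.keys ((gens_I :: 'a mpoly list) ! k) \<subseteq> GJ"
  unfolding gens_I_def Var_pow
  by (auto simp: less_Suc_eq numeral_eq_Suc GJ_def)

lemma gens_J_keys: "k < length (gens_J :: 'a::comm_ring_1 mpoly list) \<Longrightarrow> Poly_Mapping.keys ((gens_J :: 'a mpoly list) ! k) \<subseteq> GJ"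
  unfolding gens_J_def gens_I_def Var_pow
  by (auto simp: less_Suc_eq numeral_eq_Suc GJ_def nth_append)

lemma AA_zero: "3 \<le> x + y \<Longrightarrow> AA x y = (0::'a::comm_ring_1)"
  unfolding AA_def by auto

lemma BB_zero: "3 \<le> x \<or> 3 \<le> y \<or> 3 \<le> z \<or> (1 \<le> x \<and> 1 \<le> y \<and> 1 \<le> z) \<Longrightarrow> BB x y z = (0::'a::comm_ring_1)"
  unfolding BB_def by auto

lemma Wm_GJ: assumes "u \<in> GJ" shows "Wm (x + u) = (0::'a::comm_ring_1)"
proof -
  have l: "\<And>i. Poly_Mapping.lookup (x + u) i = Poly_Mapping.lookup x i + Poly_Mapping.lookup u i"
    by (simp add: lookup_add)
  from assms show ?thesis
    unfolding GJ_def Wm_def l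
    apply (elim insertE)
    by (simp_all add: lookup_mon AA_zero BB_zero)
qed

lemma phi_ideal:
  assumes "p \<in> ideal_gen gs" "\<And>k. k < length gs \<Longrightarrow> Poly_Mapping.keys (gs ! k) \<subseteq> GJ"
  shows "phi p = (0::'a::comm_ring_1)"
  unfolding phi_def
proof (rule sum.neutral, rule ballI)
  fix m assume "m \<in> Poly_Mapping.keys p"
  then obtain x u where "u \<in> GJ" "m = x + u" using ideal_keys[OF assms] by blast
  then show "Wm m * Poly_Mapping.lookup p m = 0" by (simp add: Wm_GJ)
qed

lemma not_ideal:
  assumes "p \<in> ideal_gen gs" "\<And>k. k < length gs \<Longrightarrow> Poly_Mapping.keys (gs ! k) \<subseteq> GJ"
  shows "Poly_Mapping.lookup p (mon 0 0 2 2 0) = 0"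
proof (rule ccontr)
  assume "Poly_Mapping.lookup p (mon 0 0 2 2 0) \<noteq> 0"
  then have "mon 0 0 2 2 0 \<in> Poly_Mapping.keys p" by (simp add: in_keys_iff)
  then obtain x u where "u \<in> GJ" "mon 0 0 2 2 0 = x + u" using ideal_keys[OF assms] by blast
  then show False unfolding GJ_def by (auto dest: mon_dvd)
qed

lemma keys_add_nat: "Poly_Mapping.keys ((a::nat \<Rightarrow>\<^sub>0 nat) + b) = Poly_Mapping.keys a \<union> Poly_Mapping.keys b"
  by (auto simp: in_keys_iff lookup_add)

lemma in_S_add: "in_S p \<Longrightarrow> in_S q \<Longrightarrow> in_S (p + q)"
  unfolding in_S_def using keys_add[of p q] by blast

lemma in_S_diff: "in_S p \<Longrightarrow> in_S q \<Longrightarrow> in_S (p - q)"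
  unfolding in_S_def using keys_diff[of p q] by blast

lemma in_S_mult: assumes "in_S p" "in_S q" shows "in_S (p * q)"
  unfolding in_S_def
proof
  fix m assume "m \<in> Poly_Mapping.keys (p * q)"
  then have "m \<in> {a + b |a b. a \<in> Poly_Mapping.keys p \<and> b \<in> Poly_Mapping.keys q}"
    using keys_mult[of p q] by (rule subsetD[rotated])
  then obtain a b where "a \<in> Poly_Mapping.keys p" "b \<in> Poly_Mapping.keys q" "m = a + b" by auto
  then show "Poly_Mapping.keys m \<subseteq> {1..5}" using assms unfolding in_S_def by (auto simp: keys_add_nat)
qed

lemma in_S_zero: "in_S 0" by (simp add: in_S_def)

lemma in_S_Var: "i \<in> {1..5} \<Longrightarrow> in_S (Var i)"
  by (simp add: in_S_def Var_def)

lemma in_S_single_mon: "in_S (Poly_Mapping.single (mon a b c d e) k)"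
  using keys_mon by (simp add: in_S_def)

lemma mdeg_alt: "finite K \<Longrightarrow> Poly_Mapping.keys m \<subseteq> K \<Longrightarrow> mdeg m = (\<Sum>i\<in>K. Poly_Mapping.lookup m i)"
  unfolding mdeg_def by (rule sum.mono_neutral_left) (auto simp: in_keys_iff)

lemma mdeg_add: "mdeg (a + b) = mdeg a + mdeg b"
proof -
  let ?K = "Poly_Mapping.keys a \<union> Poly_Mapping.keys b"
  have "mdeg (a + b) = (\<Sum>i\<in>?K. Poly_Mapping.lookup (a + b) i)" by (rule mdeg_alt) (auto simp: keys_add_nat)
  also have "\<dots> = (\<Sum>i\<in>?K. Poly_Mapping.lookup a i) + (\<Sum>i\<in>?K. Poly_Mapping.lookup b i)"
    by (simp add: lookup_add sum.distrib)
  also have "(\<Sum>i\<in>?K. Poly_Mapping.lookup a i) = mdeg a" by (rule mdeg_alt[symmetric]) auto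
  also have "(\<Sum>i\<in>?K. Poly_Mapping.lookup b i) = mdeg b" by (rule mdeg_alt[symmetric]) auto
  finally show ?thesis .
qed

lemma homog_add: "homog d p \<Longrightarrow> homog d q \<Longrightarrow> homog d (p + q)"
  unfolding homog_def using keys_add[of p q] by blast

lemma homog_diff: "homog d p \<Longrightarrow> homog d q \<Longrightarrow> homog d (p - q)"
  unfolding homog_def using keys_diff[of p q] by blast

lemma homog_mult: assumes "homog d p" "homog e q" "n = d + e" shows "homog n (p * q)"
  unfolding homog_def
proof
  fix m assume "m \<in> Poly_Mapping.keys (p * q)"
  then have "m \<in> {a + b |a b. a \<in> Poly_Mapping.keys p \<and> b \<in> Poly_Mapping.keys q}"
    using keys_mult[of p q] by (rule subsetD[rotated])
  then obtain a b where "a \<in> Poly_Mapping.keys p" "b \<in> Poly_Mapping.keys q" "m = a + b" by auto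
  then show "mdeg m = n" using assms unfolding homog_def by (simp add: mdeg_add)
qed

lemma homog_Var: "homog 1 (Var i)"
  by (simp add: homog_def Var_def mdeg_def)

lemma homog_single_mon: "homog (a+b+c+d+e) (Poly_Mapping.single (mon a b c d e) k)"
  using keys_mon by (simp add: homog_def mdeg_of lookup_mon)

definition PP :: "'a::comm_ring_1 mpoly" where
  "PP = (Var 1 + Var 2) * (Var 1 + Var 2) - (Var 1 + Var 2) * Var 3 + Var 3 * Var 3"
definition QQ :: "'a::comm_ring_1 mpoly" where
  "QQ = Var 4 * Var 4 - Var 4 * Var 5 + Var 5 * Var 5"
definition ff :: "'a::comm_ring_1 mpoly" where
  "ff = PP * QQ"
definition cc :: "nat \<Rightarrow> 'a::comm_ring_1 mpoly" where
  "cc k = [QQ, QQ, QQ, PP, PP, QQ + QQ + QQ, QQ + QQ + QQ, 0] ! k"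

lemma in_S_PP: "in_S PP" unfolding PP_def
  by (intro in_S_add in_S_diff in_S_mult in_S_Var) auto
lemma in_S_QQ: "in_S QQ" unfolding QQ_def
  by (intro in_S_add in_S_diff in_S_mult in_S_Var) auto
lemma in_S_ff: "in_S ff" unfolding ff_def by (intro in_S_mult in_S_PP in_S_QQ)

lemma homog_PP: "homog 2 PP" unfolding PP_def
  by (intro homog_add homog_diff homog_mult[of 1 _ 1] homog_Var) auto
lemma homog_QQ: "homog 2 QQ" unfolding QQ_def
  by (intro homog_add homog_diff homog_mult[of 1 _ 1] homog_Var) auto
lemma homog_ff: "homog 4 ff" unfolding ff_def
  by (rule homog_mult[OF homog_PP homog_QQ]) simp

lemma in_S_cc: "k < 8 \<Longrightarrow> in_S (cc k)"
  using in_S_add[OF in_S_add[OF in_S_QQ in_S_QQ] in_S_QQ]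
  by (auto simp: cc_def less_Suc_eq numeral_eq_Suc in_S_PP in_S_QQ in_S_add in_S_zero)

lemma ring_id:
  fixes x1 x2 x3 x4 x5 :: "'a::comm_ring_1"
  shows "(x4 * x4 - x4 * x5 + x5 * x5) * x1 ^ 3 + (x4 * x4 - x4 * x5 + x5 * x5) * x2 ^ 3
     + (x4 * x4 - x4 * x5 + x5 * x5) * x3 ^ 3
     + ((x1 + x2) * (x1 + x2) - (x1 + x2) * x3 + x3 * x3) * x4 ^ 3
     + ((x1 + x2) * (x1 + x2) - (x1 + x2) * x3 + x3 * x3) * x5 ^ 3
     + ((x4 * x4 - x4 * x5 + x5 * x5) + (x4 * x4 - x4 * x5 + x5 * x5) + (x4 * x4 - x4 * x5 + x5 * x5)) * (x1 ^ 2 * x2)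
     + ((x4 * x4 - x4 * x5 + x5 * x5) + (x4 * x4 - x4 * x5 + x5 * x5) + (x4 * x4 - x4 * x5 + x5 * x5)) * (x1 * x2 ^ 2)
   = (x1 + x2 + x3 + x4 + x5) * (((x1 + x2) * (x1 + x2) - (x1 + x2) * x3 + x3 * x3) * (x4 * x4 - x4 * x5 + x5 * x5))"
  by (simp add: algebra_simps power2_eq_square power3_eq_cube)

lemma ell_ff: "ell * ff = (\<Sum>k<8. cc k * (gens_J ! k :: 'a::comm_ring_1 mpoly))"
proof -
  have "(\<Sum>k<8. cc k * (gens_J ! k :: 'a mpoly)) =
     QQ * Var 1 ^ 3 + QQ * Var 2 ^ 3 + QQ * Var 3 ^ 3 + PP * Var 4 ^ 3 + PP * Var 5 ^ 3
     + (QQ + QQ + QQ) * (Var 1 ^ 2 * Var 2) + (QQ + QQ + QQ) * (Var 1 * Var 2 ^ 2)"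
    by (simp add: eval_nat_numeral cc_def gens_J_def gens_I_def)
  also have "\<dots> = ell * ff"
    unfolding ell_expand ff_def PP_def QQ_def by (rule ring_id)
  finally show ?thesis by simp
qed

lemma lookup_ff: "Poly_Mapping.lookup (ff :: 'a::comm_ring_1 mpoly) (mon 0 0 2 2 0) = 1"
  unfolding ff_def PP_def QQ_def
  apply (simp only: Var_mon distrib_left distrib_right left_diff_distrib right_diff_distrib mult_single mon_add)
  apply (simp only: lookup_add lookup_minus lookup_single)
  apply (simp add: when_def)
  done

lemma ell_ff_I: "ell * ff = (\<Sum>k<7. cc k * (gens_I ! k :: 'a::comm_ring_1 mpoly))"
proof -
  have "(\<Sum>k<7. cc k * (gens_I ! k :: 'a mpoly)) = (\<Sum>k<8. cc k * (gens_J ! k :: 'a::comm_ring_1 mpoly))"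
    by (simp add: eval_nat_numeral cc_def gens_J_def gens_I_def)
  then show ?thesis by (simp add: ell_ff)
qed

lemma mem_I: "ell * ff \<in> ideal_gen (gens_I :: 'a::comm_ring_1 mpoly list)"
  unfolding ideal_gen_def
proof (rule CollectI, rule exI[of _ cc], intro conjI allI impI)
  fix k assume "k < length (gens_I :: 'a mpoly list)"
  then show "in_S (cc k :: 'a mpoly)" by (intro in_S_cc) (simp add: gens_I_def)
next
  show "ell * ff = (\<Sum>k<length (gens_I :: 'a mpoly list). cc k * gens_I ! k)"
  proof -
    have "length (gens_I :: 'a mpoly list) = 7" by (simp add: gens_I_def)
    then show ?thesis using ell_ff_I by (simp only:)
  qed
qed

lemma mem_J: "ell * ff \<in> ideal_gen (gens_J :: 'a::comm_ring_1 mpoly list)"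
  unfolding ideal_gen_def
proof (rule CollectI, rule exI[of _ cc], intro conjI allI impI)
  fix k assume "k < length (gens_J :: 'a mpoly list)"
  then show "in_S (cc k :: 'a mpoly)" by (intro in_S_cc) (simp add: gens_J_def gens_I_def)
next
  show "ell * ff = (\<Sum>k<length (gens_J :: 'a mpoly list). cc k * gens_J ! k)"
  proof -
    have "length (gens_J :: 'a mpoly list) = 8" by (simp add: gens_J_def gens_I_def)
    then show ?thesis using ell_ff by (simp only:)
  qed
qed

lemma fails_generic:
  fixes gs :: "'a::comm_ring_1 mpoly list"
  assumes keys: "\<And>k. k < length gs \<Longrightarrow> Poly_Mapping.keys (gs ! k) \<subseteq> GJ"
    and mem: "ell * ff \<in> ideal_gen gs"
  shows "fails_WLP_in_degree (ideal_gen gs) 4"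
  unfolding fails_WLP_in_degree_def
proof
  show "\<not> mult_ell_injective (ideal_gen gs) 4"
  proof
    assume "mult_ell_injective (ideal_gen gs) 4"
    then have "ff \<in> ideal_gen gs"
      unfolding mult_ell_injective_def using in_S_ff homog_ff mem by blast
    then have "Poly_Mapping.lookup (ff :: 'a mpoly) (mon 0 0 2 2 0) = 0" by (rule not_ideal[OF _ keys])
    then show False by (simp add: lookup_ff)
  qed
next
  show "\<not> mult_ell_surjective (ideal_gen gs) 4"
  proof
    assume "mult_ell_surjective (ideal_gen gs) 4"
    moreover have "in_S (Poly_Mapping.single (mon 2 0 2 1 0) (1::'a))" by (rule in_S_single_mon)
    moreover have "homog (4 + 1) (Poly_Mapping.single (mon 2 0 2 1 0) (1::'a))"
      using homog_single_mon[of 2 0 2 1 0 "1::'a"] by simp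
    ultimately obtain f where f: "in_S f" "homog 4 f"
      "Poly_Mapping.single (mon 2 0 2 1 0) 1 - ell * f \<in> ideal_gen gs"
      unfolding mult_ell_surjective_def by blast
    have "phi (Poly_Mapping.single (mon 2 0 2 1 0) 1 - ell * f) = 0"
      by (rule phi_ideal[OF f(3) keys])
    moreover have "phi (Poly_Mapping.single (mon 2 0 2 1 0) (1::'a) - ell * f) = 1"
      by (simp add: phi_diff phi_ell[OF f(1)] phi_single Wm_def lookup_mon AA_def BB_def)
    ultimately show False by simp
  qed
qed

theorem lemma4p7:
  shows "fails_WLP_in_degree (ideal_gen (gens_I :: 'a::field_char_0 mpoly list)) 4
       \<and> fails_WLP_in_degree (ideal_gen (gens_J :: 'a mpoly list)) 4"
  using fails_generic[OF gens_I_keys mem_I] fails_generic[OF gens_J_keys mem_J] by blast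

end
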